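(* For $a\in[0,1)$, $m\in\mathbb{N}$ and $\theta\in[-\pi,\pi]\setminus\{0\}$ let \[ g_m(\theta;a):=\frac{|\sin(m\theta)-a\sin((m-1)\theta)|}{|\sin\theta|\sqrt{1+a^2-2a\cos\theta}}, \] and let $g_m(0;a)$ (and the values at $\pm\pi$, $0$ where $\sin\theta=0$) be defined by continuous extension. Then \[ \max_{\theta\in[-\pi,\pi]}g_m(\theta;a)=g_m(0;a)=\frac{m-a(m-1)}{1-a}. \]
   Context: $\mathbb{N}=\{1,2,\dots\}$. *)

theory Defs
  imports "HOL-Analysis.Analysis"
begin

text \<open>g_m(theta; a) on the points where sin theta is nonzero.\<close>
definition g :: "nat \<Rightarrow> real \<Rightarrow> real \<Rightarrow> real" where
  "g m a \<theta> = \<bar>sin (real m * \<theta>) - a * sin ((real m - 1) * \<theta>)\<bar> /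
       (\<bar>sin \<theta>\<bar> * sqrt (1 + a\<^sup>2 - 2 * a * cos \<theta>))"

end

theory Submission
  imports Defs
begin

fun S :: "nat \<Rightarrow> real \<Rightarrow> real" where
  "S 0 t = 0"
| "S (Suc k) t = cos t * S k t + cos (real k * t)"

lemma S_sin: "sin t * S k t = sin (real k * t)"
proof (induction k)
  case 0 then show ?case by simp
next
  case (Suc k)
  have "sin t * S (Suc k) t = cos t * (sin t * S k t) + sin t * cos (real k * t)"
    by (simp add: algebra_simps)
  also have "\<dots> = sin (real k * t + t)" using Suc by (simp add: sin_add algebra_simps)
  finally show ?case by (simp add: algebra_simps)
qed

lemma S_bound: "\<bar>S k t\<bar> \<le> real k"
proof (induction k)
  case 0 then show ?case by simp
next
  case (Suc k)
  have "\<bar>cos t * S k t\<bar> \<le> 1 * real k"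
    unfolding abs_mult by (rule mult_mono) (use Suc in auto)
  moreover have "\<bar>cos (real k * t)\<bar> \<le> 1" by (rule abs_cos_le_one)
  ultimately show ?case using abs_triangle_ineq[of "cos t * S k t" "cos (real k * t)"]
    by (simp only: S.simps of_nat_Suc mult_1_left)
qed

lemma S_zero: "S k 0 = real k"
  by (induction k) auto

lemma S_cont: "continuous_on A (S k)"
  by (induction k) (auto intro!: continuous_intros)

lemma D_pos:
  assumes "0 \<le> a" "a < 1"
  shows "(1 - a)^2 \<le> 1 + a\<^sup>2 - 2 * a * cos (t::real)"
proof -
  have "a * cos t \<le> a * 1" using assms cos_le_one[of t] by (intro mult_left_mono) (auto simp del: mult_1_right)
  then show ?thesis by (simp add: power2_eq_square algebra_simps)
qed

theorem lemma5p1: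
  fixes a :: real and m :: nat
  assumes "0 \<le> a" and "a < 1" and "m \<ge> 1"
  shows "\<exists>G. continuous_on {-pi..pi} G
             \<and> (\<forall>\<theta>\<in>{-pi..pi}. sin \<theta> \<noteq> 0 \<longrightarrow> G \<theta> = g m a \<theta>)
             \<and> (\<forall>\<theta>\<in>{-pi..pi}. G \<theta> \<le> G 0)
             \<and> G 0 = (real m - a * (real m - 1)) / (1 - a)"
proof -
  obtain n where mn: "m = Suc n" using assms(3) by (cases m) auto
  define D where "D t = sqrt (1 + a\<^sup>2 - 2 * a * cos t)" for t
  have Dge: "1 - a \<le> D t" for t
  proof -
    have "sqrt ((1-a)^2) \<le> D t" unfolding D_def using D_pos[OF assms(1,2)]
      using real_sqrt_le_mono by blast
    then show ?thesis using assms by simp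
  qed
  have Dpos: "D t > 0" for t using Dge[of t] assms by linarith
  define G where "G t = \<bar>S m t - a * S n t\<bar> / D t" for t
  have c1: "continuous_on {-pi..pi} G"
    unfolding G_def D_def
    apply (intro continuous_intros S_cont)
    using Dpos unfolding D_def by (auto simp: less_le)
  have c2: "G t = g m a t" if "sin t \<noteq> 0" for t
  proof -
    have "sin (real m * t) - a * sin ((real m - 1) * t) = sin t * (S m t - a * S n t)"
      using S_sin[of t m] S_sin[of t n] mn by (simp add: algebra_simps)
    then show ?thesis unfolding g_def G_def D_def[symmetric] using that
      by (simp add: abs_mult)
  qed
  have G0: "G 0 = (real m - a * (real m - 1)) / (1 - a)"
  proof -
    have "1 + a\<^sup>2 - 2 * a * cos 0 = (1 - a)^2" by (simp add: power2_eq_square algebra_simps)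
    then have "D 0 = 1 - a" unfolding D_def using assms by simp
    moreover have "\<bar>real m - a * real n\<bar> = real m - a * real n"
    proof -
      have "a * real n \<le> 1 * real n" using assms by (intro mult_right_mono) auto
      then show ?thesis using mn by simp
    qed
    ultimately show ?thesis unfolding G_def using mn by (simp add: S_zero)
  qed
  have c3: "G t \<le> G 0" for t
  proof -
    have eq: "S m t - a * S n t = (cos t - a) * S n t + cos (real n * t)"
      using mn by (simp add: algebra_simps)
    have ca: "\<bar>cos t - a\<bar> \<le> D t"
      unfolding D_def
      apply (rule real_le_rsqrt)
      using sin_cos_squared_add3[of t] zero_le_square[of "sin t"] by (simp add: power2_eq_square algebra_simps, linarith)
    have "\<bar>(cos t - a) * S n t\<bar> \<le> D t * real n"
      unfolding abs_mult by (rule mult_mono) (use ca S_bound in auto)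
    moreover have "\<bar>cos (real n * t)\<bar> \<le> D t / (1 - a)"
    proof -
      have "\<bar>cos (real n * t)\<bar> * (1 - a) \<le> 1 * (1 - a)"
        using assms by (intro mult_right_mono) auto
      then have h: "\<bar>cos (real n * t)\<bar> * (1 - a) \<le> 1 - a" by (simp only: mult_1_left)
      have pos: "0 < 1 - a" using assms by simp
      show ?thesis by (subst pos_le_divide_eq[OF pos]) (rule order_trans[OF h Dge])
    qed
    ultimately have "\<bar>S m t - a * S n t\<bar> \<le> D t * (real n + 1 / (1 - a))"
      unfolding eq by (simp add: algebra_simps)
    then have "G t \<le> real n + 1 / (1 - a)" unfolding G_def
      using Dpos[of t] by (simp add: divide_le_eq mult.commute)
    also have "\<dots> = G 0" unfolding G0 using mn assms by (simp add: field_simps)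
    finally show ?thesis .
  qed
  show ?thesis using c1 c2 c3 G0 by blast
qed

end
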